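(* Let $P=(Q,I,M,\Delta)$ be a broadcast protocol, $F\subseteq Q$, and $S$ the set of states returned by the saturation algorithm on $P$. If $F\cap S\neq\emptyset$, then there exists a lossy execution $\rho$ covering $F$ with at most $2|Q|$ nodes and length at most $2|Q|^2$.
   Context: A broadcast protocol is a tuple $P=(Q,I,M,\Delta)$ where $Q$ is a finite set of states, $I\subseteq Q$ initial states, $M$ a finite message alphabet and $\Delta\subseteq Q\times\{!!m,\ ??m \mid m\in M\}\times Q$ ($!!m$ = broadcast, $??m$ = reception). Protocols are complete for receptions: for every $q$, $m$ there is $q'$ with $(q,??m,q')\in\Delta$. A configuration is a finite undirected graph $\gamma=(V,E,L)$, $E$ symmetric irreflexive, $L:V\to Q$; $L(\gamma)=L(V)$; $\gamma$ is initial if $L(V)\subseteq I$. A lossy step goes from $\gamma=(V,E,L)$ to $\gamma'=(V,E,L')$ (same nodes and edges) if there exist a node $v$ and $m\in M$ with $(L(v),!!m,L'(v))\in\Delta$ and either (a) $L'(v')=L(v')$ for all $v'\neq v$ (lost broadcast), or (b) for every $v'\neq v$: if $v'$ is a neighbour of $v$ then $(L(v'),??m,L'(v'))\in\Delta$, otherwise $L'(v')=L(v')$ (successful broadcast). A lossy execution is a sequence $\gamma_0,\dots,\gamma_r$ with $\gamma_0$ initial and consecutive lossy steps; its number of nodes is $|V|$, its length is $r$, and it covers $F$ if $L(\gamma_r)\cap F\neq\emptyset$. The saturation algorithm: start with $S:=I$, $c:=|I|$; repeat: if there is $(q_1,!!m,q_2)\in\Delta$ with $q_1\in S$, $q_2\notin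 S$, add $q_2$ to $S$ and $c:=c+1$; else if there are $(q_1,!!m,q_2),(q_1',??m,q_2')\in\Delta$ with $q_1,q_2,q_1'\in S$, $q_2'\notin S$, add $q_2'$ and $c:=c+2$; else stop and return $S$. *)

theory Defs
  imports Main
begin

datatype 'm action = Bcast 'm | Recv 'm

definition broadcast_protocol ::
  "'q set \<Rightarrow> 'q set \<Rightarrow> 'm set \<Rightarrow> ('q \<times> 'm action \<times> 'q) set \<Rightarrow> bool" where
  "broadcast_protocol Q I M \<Delta> \<longleftrightarrow>
     finite Q \<and> I \<subseteq> Q \<and> finite M \<and>
     (\<forall>(q, a, q') \<in> \<Delta>. q \<in> Q \<and> q' \<in> Q \<and> (\<exists>m\<in>M. a = Bcast m \<or> a = Recv m)) \<and>
     (\<forall>q\<in>Q. \<forall>m\<in>M. \<exists>q'. (q, Recv m, q') \<in> \<Delta>)"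

definition graph_ok :: "'v set \<Rightarrow> ('v \<times> 'v) set \<Rightarrow> bool" where
  "graph_ok V E \<longleftrightarrow> finite V \<and> E \<subseteq> V \<times> V \<and> sym E \<and> irrefl E"

definition lossy_step ::
  "'m set \<Rightarrow> ('q \<times> 'm action \<times> 'q) set \<Rightarrow> 'v set \<Rightarrow> ('v \<times> 'v) set \<Rightarrow>
   ('v \<Rightarrow> 'q) \<Rightarrow> ('v \<Rightarrow> 'q) \<Rightarrow> bool" where
  "lossy_step M \<Delta> V E L L' \<longleftrightarrow>
     (\<exists>v\<in>V. \<exists>m\<in>M. (L v, Bcast m, L' v) \<in> \<Delta> \<and>
        ((\<forall>v'\<in>V. v' \<noteq> v \<longrightarrow> L' v' = L v') \<or>
         (\<forall>v'\<in>V. v' \<noteq> v \<longrightarrow>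
            ((v, v') \<in> E \<longrightarrow> (L v', Recv m, L' v') \<in> \<Delta>) \<and>
            ((v, v') \<notin> E \<longrightarrow> L' v' = L v'))))"

text \<open>A lossy execution gamma_0, ..., gamma_r on graph (V, E), given as the list of
labellings [L_0, ..., L_r]; its length is r = length Ls - 1, its number of nodes card V.\<close>
definition lossy_execution ::
  "'q set \<Rightarrow> 'q set \<Rightarrow> 'm set \<Rightarrow> ('q \<times> 'm action \<times> 'q) set \<Rightarrow>
   'v set \<Rightarrow> ('v \<times> 'v) set \<Rightarrow> ('v \<Rightarrow> 'q) list \<Rightarrow> bool" where
  "lossy_execution Q I M \<Delta> V E Ls \<longleftrightarrow>
     graph_ok V E \<and> Ls \<noteq> [] \<and>
     (\<forall>L\<in>set Ls. L ` V \<subseteq> Q) \<and>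
     hd Ls ` V \<subseteq> I \<and>
     (\<forall>i. Suc i < length Ls \<longrightarrow> lossy_step M \<Delta> V E (Ls ! i) (Ls ! Suc i))"

definition covers :: "'v set \<Rightarrow> ('v \<Rightarrow> 'q) list \<Rightarrow> 'q set \<Rightarrow> bool" where
  "covers V Ls F \<longleftrightarrow> last Ls ` V \<inter> F \<noteq> {}"

text \<open>One step of the saturation algorithm (the counter c is irrelevant for S).\<close>
definition sat_step :: "('q \<times> 'm action \<times> 'q) set \<Rightarrow> 'q set \<Rightarrow> 'q set \<Rightarrow> bool" where
  "sat_step \<Delta> S S' \<longleftrightarrow>
     (\<exists>q1 m q2. (q1, Bcast m, q2) \<in> \<Delta> \<and> q1 \<in> S \<and> q2 \<notin> S \<and> S' = insert q2 S)
   \<or> ((\<nexists>q1 m q2. (q1, Bcast m, q2) \<in> \<Delta> \<and> q1 \<in> S \<and> q2 \<notin> S) \<and>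
      (\<exists>q1 m q2 q1' q2'. (q1, Bcast m, q2) \<in> \<Delta> \<and> (q1', Recv m, q2') \<in> \<Delta> \<and>
          q1 \<in> S \<and> q2 \<in> S \<and> q1' \<in> S \<and> q2' \<notin> S \<and> S' = insert q2' S))"

definition saturation_result :: "'q set \<Rightarrow> ('q \<times> 'm action \<times> 'q) set \<Rightarrow> 'q set \<Rightarrow> bool" where
  "saturation_result I \<Delta> S \<longleftrightarrow> (sat_step \<Delta>)\<^sup>*\<^sup>* I S \<and> (\<nexists>S'. sat_step \<Delta> S S')"

end

theory Submission
  imports Defs
begin

definition lost_step ::
  "'m set \<Rightarrow> ('q \<times> 'm action \<times> 'q) set \<Rightarrow> 'v set \<Rightarrow> ('v \<Rightarrow> 'q) \<Rightarrow> ('v \<Rightarrow> 'q) \<Rightarrow> bool" where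
  "lost_step M \<Delta> V L L' \<longleftrightarrow>
     (\<exists>v\<in>V. \<exists>m\<in>M. (L v, Bcast m, L' v) \<in> \<Delta> \<and> (\<forall>v'\<in>V. v' \<noteq> v \<longrightarrow> L' v' = L v'))"

lemma lost_lossy: "lost_step M \<Delta> V L L' \<Longrightarrow> lossy_step M \<Delta> V E L L'"
  unfolding lost_step_def lossy_step_def by blast

context
  fixes Q I :: "'q set" and M :: "'m set" and \<Delta> :: "('q \<times> 'm action \<times> 'q) set"
  assumes bp: "broadcast_protocol Q I M \<Delta>"
begin

lemma finQ: "finite Q" and IQ: "I \<subseteq> Q" and finM: "finite M"
  using bp unfolding broadcast_protocol_def by auto

lemma deltaQ: "(q, a, q') \<in> \<Delta> \<Longrightarrow> q \<in> Q \<and> q' \<in> Q"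
  using bp unfolding broadcast_protocol_def by blast

lemma bcastM: "(q, Bcast m, q') \<in> \<Delta> \<Longrightarrow> m \<in> M"
  using bp unfolding broadcast_protocol_def by fastforce

lemma recv_ex: "q \<in> Q \<Longrightarrow> m \<in> M \<Longrightarrow> \<exists>q'. (q, Recv m, q') \<in> \<Delta>"
  using bp unfolding broadcast_protocol_def by blast

lemma sat_props:
  assumes "(sat_step \<Delta> ^^ n) I S"
  shows "finite S \<and> card S = card I + n \<and> S \<subseteq> Q"
  using assms
proof (induction n arbitrary: S)
  case 0
  then show ?case using finQ IQ finite_subset by auto
next
  case (Suc n)
  then obtain S0 where h0: "(sat_step \<Delta> ^^ n) I S0" and h1: "sat_step \<Delta> S0 S" by auto
  from Suc.IH[OF h0] have ih: "finite S0" "card S0 = card I + n" "S0 \<subseteq> Q" by auto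
  from h1 obtain x where "x \<notin> S0" "S = insert x S0" "x \<in> Q"
    unfolding sat_step_def using deltaQ by blast
  then show ?case using ih by auto
qed

lemma lost_ext:
  assumes "finite X" "X \<subseteq> V" "\<forall>x\<in>X. L x = p" "(p, Bcast m, s) \<in> \<Delta>" "L ` V \<subseteq> Q"
  shows "\<exists>ys. length ys = card X \<and> last (L # ys) = (\<lambda>v. if v \<in> X then s else L v)
           \<and> successively (lost_step M \<Delta> V) (L # ys) \<and> (\<forall>L'\<in>set ys. L' ` V \<subseteq> Q)"
  using assms(1-3)
proof (induction X rule: finite_induct)
  case empty
  then show ?case by (intro exI[of _ "[]"]) auto
next
  case (insert x X)
  then obtain ys where ys: "length ys = card X" "last (L # ys) = (\<lambda>v. if v \<in> X then s else L v)"
    "successively (lost_step M \<Delta> V) (L # ys)" "\<forall>L'\<in>set ys. L' ` V \<subseteq> Q" by auto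
  define L2 where "L2 = (\<lambda>v. if v \<in> insert x X then s else L v)"
  have st: "lost_step M \<Delta> V (last (L # ys)) L2"
    unfolding lost_step_def ys(2) L2_def
    apply (rule bexI[of _ x])
    using insert assms(4) bcastM by auto
  have sQ: "s \<in> Q" using deltaQ assms(4) by blast
  have "successively (lost_step M \<Delta> V) ((L # ys) @ [L2])"
    using ys(3) st by (simp only: successively_append_iff) auto
  then have sc: "successively (lost_step M \<Delta> V) (L # ys @ [L2])" by simp
  have "L2 ` V \<subseteq> Q" using sQ assms(5) by (auto simp: L2_def)
  then show ?case
    apply (intro exI[of _ "ys @ [L2]"])
    using ys sc insert by (auto simp: L2_def)
qed

definition good :: "nat set \<Rightarrow> (nat \<Rightarrow> 'q) \<Rightarrow> nat \<Rightarrow> nat set \<Rightarrow> (nat \<times> nat) set \<Rightarrow> (nat \<Rightarrow> 'q) list \<Rightarrow> bool" where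
  "good D d n V E Ls \<longleftrightarrow> graph_ok V E \<and> Ls \<noteq> [] \<and> (\<forall>L\<in>set Ls. L ` V \<subseteq> Q) \<and> hd Ls ` V \<subseteq> I
     \<and> D \<subseteq> V \<and> card V \<le> card D + n \<and> (\<forall>v\<in>D. last Ls v = d v) \<and> (\<forall>x\<in>D. \<forall>y\<in>D. (x,y) \<notin> E)
     \<and> length Ls \<le> 1 + n * (card D + n)
     \<and> (\<forall>E'. E \<subseteq> E' \<longrightarrow> E' \<subseteq> E \<union> D \<times> D \<longrightarrow> successively (lossy_step M \<Delta> V E') Ls)"

lemma goodD:
  assumes "good D d n V E Ls"
  shows "graph_ok V E" "Ls \<noteq> []" "\<forall>L\<in>set Ls. L ` V \<subseteq> Q" "hd Ls ` V \<subseteq> I"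
     "D \<subseteq> V" "card V \<le> card D + n" "\<forall>v\<in>D. last Ls v = d v" "\<forall>x\<in>D. \<forall>y\<in>D. (x,y) \<notin> E"
     "length Ls \<le> 1 + n * (card D + n)"
     "\<And>E'. E \<subseteq> E' \<Longrightarrow> E' \<subseteq> E \<union> D \<times> D \<Longrightarrow> successively (lossy_step M \<Delta> V E') Ls"
  using assms unfolding good_def
  apply -
  apply (elim conjE, assumption)+
  apply (elim conjE)
  apply (erule allE, erule impE, assumption, erule impE, assumption, assumption)
  done

lemma main:
  assumes "(sat_step \<Delta> ^^ n) I Sn" "finite D" "d ` D \<subseteq> Sn"
  shows "\<exists>V E Ls. good D d n V E Ls"
  using assms
proof (induction n arbitrary: Sn D d)
  case 0
  then have dI: "d ` D \<subseteq> I" by simp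
  have "good D d 0 D {} [d]"
    unfolding good_def graph_ok_def using 0 dI IQ by (auto simp: sym_def irrefl_def)
  then show ?case by blast
next
  case (Suc n)
  then obtain S0 where h0: "(sat_step \<Delta> ^^ n) I S0" and h1: "sat_step \<Delta> S0 Sn" by auto
  show ?case
  proof (cases "\<exists>q1 m q2. (q1, Bcast m, q2) \<in> \<Delta> \<and> q1 \<in> S0 \<and> q2 \<notin> S0 \<and> Sn = insert q2 S0")
    case True
    then obtain p m s where pms: "(p, Bcast m, s) \<in> \<Delta>" "p \<in> S0" "Sn = insert s S0" by blast
    define d' where "d' = (\<lambda>v. if d v = s then p else d v)"
    have "d' ` D \<subseteq> S0" using Suc.prems pms unfolding d'_def by auto
    from Suc.IH[OF h0 Suc.prems(2) this] obtain V E Ls where g: "good D d' n V E Ls" by blast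
    define X where "X = {v\<in>D. d v = s}"
    have X: "finite X" "X \<subseteq> V" "\<forall>x\<in>X. last Ls x = p"
      using goodD(1-9)[OF g] Suc.prems(2) unfolding X_def d'_def by auto
    have LQ: "last Ls ` V \<subseteq> Q" using goodD(1-9)[OF g] by auto
    obtain ys where ys: "length ys = card X" "last (last Ls # ys) = (\<lambda>v. if v \<in> X then s else last Ls v)"
      "successively (lost_step M \<Delta> V) (last Ls # ys)" "\<forall>L'\<in>set ys. L' ` V \<subseteq> Q"
      using lost_ext[OF X pms(1) LQ] by blast
    have cX: "card X \<le> card D" using Suc.prems(2) unfolding X_def by (intro card_mono) auto
    have "good D d (Suc n) V E (Ls @ ys)"
      unfolding good_def
    proof (intro conjI allI impI)
      show "graph_ok V E" "Ls @ ys \<noteq> []" "hd (Ls @ ys) ` V \<subseteq> I" "D \<subseteq> V" "\<forall>x\<in>D. \<forall>y\<in>D. (x, y) \<notin> E"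
        using goodD(1-9)[OF g] by auto
      show "\<forall>L\<in>set (Ls @ ys). L ` V \<subseteq> Q" using goodD(3)[OF g] ys(4) by (metis Un_iff set_append)
      show "card V \<le> card D + Suc n" using goodD(1-9)[OF g] by auto
      have "last (Ls @ ys) = last (last Ls # ys)" by (cases ys) auto
      then show "\<forall>v\<in>D. last (Ls @ ys) v = d v"
        using goodD(1-9)[OF g] ys(2) unfolding X_def d'_def by auto
      have "length Ls \<le> 1 + n * (card D + n)" using goodD(1-9)[OF g] by auto
      then show "length (Ls @ ys) \<le> 1 + Suc n * (card D + Suc n)" using ys(1) cX by simp
    next
      fix E' assume E': "E \<subseteq> E'" "E' \<subseteq> E \<union> D \<times> D"
      have s1: "successively (lossy_step M \<Delta> V E') Ls" using goodD(10)[OF g] E' by blast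
      have s2: "successively (lossy_step M \<Delta> V E') (last Ls # ys)"
        using ys(3) by (rule successively_mono) (rule lost_lossy)
      from s2 have s3: "successively (lossy_step M \<Delta> V E') ys" "ys \<noteq> [] \<Longrightarrow> lossy_step M \<Delta> V E' (last Ls) (hd ys)"
        by (auto simp: successively_Cons)
      show "successively (lossy_step M \<Delta> V E') (Ls @ ys)"
        using s1 s3 by (auto simp: successively_append_iff)
    qed
    then show ?thesis by blast
  next
    case False
    with h1 obtain a m b c s where abc: "(a, Bcast m, b) \<in> \<Delta>" "(c, Recv m, s) \<in> \<Delta>"
      "a \<in> S0" "b \<in> S0" "c \<in> S0" "s \<notin> S0" "Sn = insert s S0"
      unfolding sat_step_def by blast
    obtain h :: nat where h: "h \<notin> D" using Suc.prems(2) ex_new_if_finite infinite_UNIV_nat by blast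
    define d' where "d' = (\<lambda>v. if v = h then a else if d v = s then c else d v)"
    have "d' ` (D \<union> {h}) \<subseteq> S0" using Suc.prems abc unfolding d'_def by auto
    from Suc.IH[OF h0 _ this] Suc.prems(2) obtain V E Ls where g: "good (D \<union> {h}) d' n V E Ls" by blast
    define X where "X = {v\<in>D. d v = s}"
    define L where "L = last Ls"
    define E2 where "E2 = E \<union> {(h,v)|v. v \<in> X} \<union> {(v,h)|v. v \<in> X}"
    define L' where "L' = (\<lambda>v. if v = h then b else if v \<in> X then s
        else if (h,v) \<in> E then (SOME q'. (L v, Recv m, q') \<in> \<Delta>) else L v)"
    have mM: "m \<in> M" using abc(1) bcastM by blast
    have LQ: "L ` V \<subseteq> Q" using goodD(1-9)[OF g] L_def by auto
    have hV: "h \<in> V" and DV: "D \<subseteq> V" using goodD(1-9)[OF g] by auto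
    have XD: "X \<subseteq> D" unfolding X_def by auto
    have Lh: "L h = a" using goodD(1-9)[OF g] L_def d'_def by auto
    have LX: "\<forall>v\<in>X. L v = c" using goodD(1-9)[OF g] h unfolding L_def d'_def X_def by auto
    have noE: "\<forall>x\<in>D \<union> {h}. \<forall>y\<in>D \<union> {h}. (x, y) \<notin> E" using goodD(8)[OF g] by blast
    have some: "(L v, Recv m, (SOME q'. (L v, Recv m, q') \<in> \<Delta>)) \<in> \<Delta>" if "v \<in> V" for v
    proof -
      have "L v \<in> Q" using LQ that by blast
      then show ?thesis by (rule someI_ex[OF recv_ex[OF _ mM]])
    qed
    have laststep: "lossy_step M \<Delta> V E' L L'" if E'h: "\<forall>v. (h,v) \<in> E' \<longleftrightarrow> (h,v) \<in> E2" for E'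
      unfolding lossy_step_def
    proof (rule bexI[OF _ hV], rule bexI[OF _ mM], intro conjI disjI2 ballI impI)
      show "(L h, Bcast m, L' h) \<in> \<Delta>" using Lh abc(1) by (simp add: L'_def)
    next
      fix v' assume v': "v' \<in> V" "v' \<noteq> h" "(h, v') \<in> E'"
      then have "(h,v') \<in> E2" using E'h by blast
      show "(L v', Recv m, L' v') \<in> \<Delta>"
      proof (cases "v' \<in> X")
        case True
        then show ?thesis using v'(2) LX abc(2) by (simp add: L'_def)
      next
        case False
        with \<open>(h,v') \<in> E2\<close> have "(h,v') \<in> E" unfolding E2_def by blast
        then show ?thesis using False v'(2) some[OF v'(1)] by (simp add: L'_def)
      qed
    next
      fix v' assume v': "v' \<in> V" "v' \<noteq> h" "(h, v') \<notin> E'"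
      then have "(h,v') \<notin> E2" using E'h by blast
      then have "v' \<notin> X" "(h,v') \<notin> E" unfolding E2_def by blast+
      then show "L' v' = L v'" using v'(2) by (simp add: L'_def)
    qed
    have cX: "card (D \<union> {h}) = card D + 1" using h Suc.prems(2) by simp
    have "good D d (Suc n) V E2 (Ls @ [L'])"
      unfolding good_def
    proof (intro conjI allI impI)
      show "graph_ok V E2" using goodD(1)[OF g] hV DV XD h unfolding graph_ok_def E2_def sym_def irrefl_def
        by auto
      show "Ls @ [L'] \<noteq> []" "hd (Ls @ [L']) ` V \<subseteq> I" "D \<subseteq> V"
        using goodD(1-9)[OF g] by auto
      show "\<forall>x\<in>D. \<forall>y\<in>D. (x, y) \<notin> E2" using noE h XD unfolding E2_def by auto
      have "L' ` V \<subseteq> Q"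
      proof
        fix q assume "q \<in> L' ` V"
        then obtain v where v: "v \<in> V" "q = L' v" by blast
        show "q \<in> Q" using v LQ deltaQ[OF abc(1)] deltaQ[OF abc(2)] deltaQ[OF some[OF v(1)]]
          unfolding L'_def by (auto split: if_splits)
      qed
      then show "\<forall>L\<in>set (Ls @ [L']). L ` V \<subseteq> Q" using goodD(1-9)[OF g] by auto
      show "card V \<le> card D + Suc n" using goodD(1-9)[OF g] cX by auto
      show "\<forall>v\<in>D. last (Ls @ [L']) v = d v"
      proof
        fix v assume v: "v \<in> D"
        then have "(h,v) \<notin> E" using noE by blast
        then show "last (Ls @ [L']) v = d v" using goodD(1-9)[OF g] v h unfolding L'_def L_def X_def d'_def
          by auto
      qed
      have "length Ls \<le> 1 + n * (card D + 1 + n)" using goodD(1-9)[OF g] cX by auto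
      then show "length (Ls @ [L']) \<le> 1 + Suc n * (card D + Suc n)" by simp
    next
      fix E' assume E': "E2 \<subseteq> E'" "E' \<subseteq> E2 \<union> D \<times> D"
      have "E \<subseteq> E'" "E' \<subseteq> E \<union> (D \<union> {h}) \<times> (D \<union> {h})" using E' XD unfolding E2_def by auto
      then have s1: "successively (lossy_step M \<Delta> V E') Ls" using goodD(10)[OF g] by blast
      have "\<forall>v. (h,v) \<in> E' \<longleftrightarrow> (h,v) \<in> E2" using E' h by blast
      then have "lossy_step M \<Delta> V E' L L'" by (rule laststep)
      then show "successively (lossy_step M \<Delta> V E') (Ls @ [L'])"
        using s1 goodD(1-9)[OF g] unfolding L_def by (auto simp: successively_append_iff)
    qed
    then show ?thesis by blast
  qed
qed

end

theorem theorem3p5: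
  fixes Q I :: "'q set" and M :: "'m set" and \<Delta> :: "('q \<times> 'm action \<times> 'q) set"
    and F S :: "'q set"
  assumes "broadcast_protocol Q I M \<Delta>"
    and "F \<subseteq> Q"
    and "saturation_result I \<Delta> S"
    and "F \<inter> S \<noteq> {}"
  shows "\<exists>(V :: nat set) E Ls.
           lossy_execution Q I M \<Delta> V E Ls \<and> covers V Ls F \<and>
           card V \<le> 2 * card Q \<and> length Ls - 1 \<le> 2 * card Q ^ 2"
proof -
  from assms(3) have "(sat_step \<Delta>)\<^sup>*\<^sup>* I S" unfolding saturation_result_def by blast
  then obtain n where rn: "(sat_step \<Delta> ^^ n) I S" by (auto simp: rtranclp_power)
  obtain q where q: "q \<in> F" "q \<in> S" using assms(4) by blast
  have sp: "finite S \<and> card S = card I + n \<and> S \<subseteq> Q" by (rule sat_props[OF assms(1) rn])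
  have "(\<lambda>_. q) ` {0::nat} \<subseteq> S" using q by auto
  then obtain V E Ls where g: "good Q I M \<Delta> {0::nat} (\<lambda>_. q) n V E Ls"
    using main[OF assms(1) rn, of "{0::nat}" "\<lambda>_. q"] by auto
  note gd = goodD[OF assms(1) g]
  have fQ: "finite Q" using finQ[OF assms(1)] .
  have "card S \<le> card Q" using sp fQ by (intro card_mono) auto
  then have nQ: "n \<le> card Q" using sp by simp
  have "q \<in> Q" using sp q by blast
  then have Q1: "1 \<le> card Q" using fQ by (metis One_nat_def Suc_leI card_gt_0_iff empty_iff)
  have "lossy_execution Q I M \<Delta> V E Ls"
    unfolding lossy_execution_def
  proof (intro conjI)
    show "graph_ok V E" "Ls \<noteq> []" "\<forall>L\<in>set Ls. L ` V \<subseteq> Q" "hd Ls ` V \<subseteq> I"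
      using gd(1-4) by auto
    have "successively (lossy_step M \<Delta> V E) Ls" using gd(10)[of E] by blast
    then show "\<forall>i. Suc i < length Ls \<longrightarrow> lossy_step M \<Delta> V E (Ls ! i) (Ls ! Suc i)"
      by (simp add: successively_conv_nth)
  qed
  moreover have "covers V Ls F" unfolding covers_def using gd(5,7) q by auto
  moreover have "card V \<le> 2 * card Q" using gd(6) nQ Q1 by simp
  moreover have "length Ls - 1 \<le> 2 * card Q ^ 2"
  proof -
    have "length Ls - 1 \<le> n * (1 + n)" using gd(9) by simp
    also have "\<dots> \<le> card Q * (card Q + card Q)" using nQ Q1 by (intro mult_mono) auto
    also have "\<dots> = 2 * card Q ^ 2" by (simp add: power2_eq_square)
    finally show ?thesis .
  qed
  ultimately show ?thesis by blast
qed

end
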